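(* Let $\Omega$ be a set, $q$ a set of operations on $\Omega$, and $\Pi$ a set of similarities on $\Omega$ that is a monoid with involution. Then: (1) if $\approx_\Pi\in\Pi$, then $\approx_\Pi$ equals $\sim_{\mathrm{Inv}(\Pi)}$; (2) $\sim_q$ equals $\approx_{\mathrm{Sim}(q)}$.
   Context: A similarity on $\Omega$ is a relation $\pi\subseteq\Omega\times\Omega$ such that every $a$ has some $b$ with $a\pi b$ and every $b$ has some $a$ with $a\pi b$; $\bar a\,\pi\,\bar b$ means coordinatewise relatedness; for relations $R,S\subseteq\Omega^k$, $R\,\pi\,S$ means $\bar a\pi\bar b$ implies ($\bar a\in R\iff\bar b\in S$). A monoid with involution is a set of similarities closed under composition and converses. A set of operations is a set of finitary relations and quantifiers (subsets of $\mathcal P(\Omega^{k_1})\times\cdots\times\mathcal P(\Omega^{k_l})$) on $\Omega$; $\mathscr L^-_{\infty\infty}(q)$ is the equality-free infinitary logic with predicate and Lindström quantifier symbols for members of $q$. $a\sim_q b$ iff for all formulas $\phi(x,\bar y)$ of $\mathscr L^-_{\infty\infty}(q)$ and tuples $\bar c$ from $\Omega$, $\phi(a,\bar c)\iff\phi(b,\bar c)$. $a\approx_\Pi b$ iff for every finite $k$ and $\bar c\in\Omega^k$ some $\pi\in\Pi$ has $(a,\bar c)\,\pi\,(b,\bar c)$. A relation $R$ is invariant under a similarity or equivalence relation $\rho$ if $\bar a\rho\bar b$ implies $\bar a\in R\iff\bar b\in R$; a quantifier $Q$ is $\sim$-invariant under $\pi$ if for all $\bar R,\bar S$ of its type with each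 component invariant under $\sim$ and $R_i\,\pi\,S_i$: $\bar R\in Q\iff\bar S\in Q$. $\mathrm{Inv}(\Pi)$: all relations invariant under every $\pi\in\Pi$ and all quantifiers $\approx_\Pi$-invariant under every $\pi\in\Pi$. $\mathrm{Sim}(q)$: all similarities $\pi$ under which every relation of $q$ is invariant and every quantifier of $q$ is $\sim_q$-invariant. *)

theory Defs
  imports Main
begin

text \<open>The underlying set \<Omega> is the universe of the type 'a. Elements of \<Omega>^k are
  lists of length k. Similarities are relations given as sets of pairs.\<close>

definition tuples :: "nat \<Rightarrow> 'a list set" where
  "tuples k = {xs. length xs = k}"

definition similarity :: "('a \<times> 'a) set \<Rightarrow> bool" where
  "similarity \<pi> \<longleftrightarrow> (\<forall>a. \<exists>b. (a, b) \<in> \<pi>) \<and> (\<forall>b. \<exists>a. (a, b) \<in> \<pi>)"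

definition rel_tuple :: "('a \<times> 'a) set \<Rightarrow> 'a list \<Rightarrow> 'a list \<Rightarrow> bool" where
  "rel_tuple \<pi> as bs \<longleftrightarrow> list_all2 (\<lambda>x y. (x, y) \<in> \<pi>) as bs"

definition rel_sim :: "('a \<times> 'a) set \<Rightarrow> nat \<Rightarrow> 'a list set \<Rightarrow> 'a list set \<Rightarrow> bool" where
  "rel_sim \<pi> k R S \<longleftrightarrow>
     (\<forall>as bs. length as = k \<longrightarrow> rel_tuple \<pi> as bs \<longrightarrow> (as \<in> R \<longleftrightarrow> bs \<in> S))"

definition monoid_with_involution :: "('a \<times> 'a) set set \<Rightarrow> bool" where
  "monoid_with_involution \<Pi> \<longleftrightarrow>
     (\<forall>\<pi>\<in>\<Pi>. similarity \<pi>) \<and> (\<forall>\<pi>\<in>\<Pi>. \<forall>\<rho>\<in>\<Pi>. \<pi> O \<rho> \<in> \<Pi>) \<and> (\<forall>\<pi>\<in>\<Pi>. \<pi>\<inverse> \<in> \<Pi>)"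

text \<open>Operations: a k-ary relation, or a Lindstroem quantifier of type (k_1,...,k_l),
  i.e. a set of l-tuples (R_1,...,R_l) with R_i a subset of \<Omega>^(k_i).\<close>
datatype 'a operation = Rel nat "'a list set" | Quant "nat list" "'a list set list set"

definition qtype :: "nat list \<Rightarrow> 'a list set list set" where
  "qtype ks = {Rs. length Rs = length ks \<and> (\<forall>i<length ks. Rs ! i \<subseteq> tuples (ks ! i))}"

fun wf_op :: "'a operation \<Rightarrow> bool" where
  "wf_op (Rel k R) \<longleftrightarrow> R \<subseteq> tuples k"
| "wf_op (Quant ks Q) \<longleftrightarrow> Q \<subseteq> qtype ks"

definition operations :: "'a operation set \<Rightarrow> bool" where
  "operations q \<longleftrightarrow> (\<forall>op\<in>q. wf_op op)"

definition inv_rel :: "('a \<times> 'a) set \<Rightarrow> nat \<Rightarrow> 'a list set \<Rightarrow> bool" where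
  "inv_rel \<rho> k R \<longleftrightarrow>
     (\<forall>as bs. length as = k \<longrightarrow> rel_tuple \<rho> as bs \<longrightarrow> (as \<in> R \<longleftrightarrow> bs \<in> R))"

definition quant_inv :: "('a \<times> 'a) set \<Rightarrow> ('a \<times> 'a) set \<Rightarrow> nat list \<Rightarrow> 'a list set list set \<Rightarrow> bool" where
  "quant_inv E \<pi> ks Q \<longleftrightarrow>
     (\<forall>Rs Ss. Rs \<in> qtype ks \<longrightarrow> Ss \<in> qtype ks \<longrightarrow>
        (\<forall>i<length ks. inv_rel E (ks ! i) (Rs ! i) \<and> inv_rel E (ks ! i) (Ss ! i)
                       \<and> rel_sim \<pi> (ks ! i) (Rs ! i) (Ss ! i)) \<longrightarrow>
        (Rs \<in> Q \<longleftrightarrow> Ss \<in> Q))"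

text \<open>Semantics of L^-_{\<infinity>\<infinity>}(q): variables range over the type 'v; a formula is
  identified with its extension, a set of assignments 'v \<Rightarrow> 'a.\<close>

definition upd :: "('v \<Rightarrow> 'a) \<Rightarrow> 'v list \<Rightarrow> 'a list \<Rightarrow> ('v \<Rightarrow> 'a)" where
  "upd s xs as = (\<lambda>v. case map_of (zip xs as) v of Some a \<Rightarrow> a | None \<Rightarrow> s v)"

inductive_set definable :: "'a operation set \<Rightarrow> ('v \<Rightarrow> 'a) set set"
  for q :: "'a operation set" where
  atom: "Rel k R \<in> q \<Longrightarrow> length vs = k \<Longrightarrow> {s. map s vs \<in> R} \<in> definable q"
| neg: "X \<in> definable q \<Longrightarrow> - X \<in> definable q"
| conj: "(\<forall>X\<in>F. X \<in> definable q) \<Longrightarrow> \<Inter>F \<in> definable q"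
| ex: "X \<in> definable q \<Longrightarrow>
         {s. \<exists>t\<in>X. \<forall>v. v \<notin> W \<longrightarrow> t v = s v} \<in> definable q"
| quant: "Quant ks Q \<in> q \<Longrightarrow> length xss = length ks \<Longrightarrow> length Xs = length ks \<Longrightarrow>
         (\<forall>i<length ks. length (xss ! i) = ks ! i \<and> distinct (xss ! i) \<and> Xs ! i \<in> definable q) \<Longrightarrow>
         {s. map (\<lambda>i. {as. length as = ks ! i \<and> upd s (xss ! i) as \<in> Xs ! i}) [0..<length ks] \<in> Q}
           \<in> definable q"

text \<open>X has its free variables among V.\<close>
definition depends_only :: "('v \<Rightarrow> 'a) set \<Rightarrow> 'v set \<Rightarrow> bool" where
  "depends_only X V \<longleftrightarrow> (\<forall>s t. (\<forall>v\<in>V. s v = t v) \<longrightarrow> (s \<in> X \<longleftrightarrow> t \<in> X))"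

definition indisc :: "'v itself \<Rightarrow> 'a operation set \<Rightarrow> ('a \<times> 'a) set" where
  "indisc (_ :: 'v itself) q = {(a, b).
     \<forall>(X :: ('v \<Rightarrow> 'a) set) \<in> definable q. \<forall>x ys.
       distinct (x # ys) \<and> depends_only X (set (x # ys)) \<longrightarrow>
       (\<forall>cs s. length cs = length ys \<longrightarrow>
          (upd s (x # ys) (a # cs) \<in> X \<longleftrightarrow> upd s (x # ys) (b # cs) \<in> X))}"

definition approx :: "('a \<times> 'a) set set \<Rightarrow> ('a \<times> 'a) set" where
  "approx \<Pi> = {(a, b). \<forall>cs. \<exists>\<pi>\<in>\<Pi>. rel_tuple \<pi> (a # cs) (b # cs)}"

definition Inv :: "('a \<times> 'a) set set \<Rightarrow> 'a operation set" where
  "Inv \<Pi> =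
     {Rel k R | k R. R \<subseteq> tuples k \<and> (\<forall>\<pi>\<in>\<Pi>. inv_rel \<pi> k R)}
   \<union> {Quant ks Q | ks Q. Q \<subseteq> qtype ks \<and> (\<forall>\<pi>\<in>\<Pi>. quant_inv (approx \<Pi>) \<pi> ks Q)}"

definition Sim :: "'v itself \<Rightarrow> 'a operation set \<Rightarrow> ('a \<times> 'a) set set" where
  "Sim V q = {\<pi>. similarity \<pi>
     \<and> (\<forall>k R. Rel k R \<in> q \<longrightarrow> inv_rel \<pi> k R)
     \<and> (\<forall>ks Q. Quant ks Q \<in> q \<longrightarrow> quant_inv (indisc V q) \<pi> ks Q)}"

end

theory Submission
  imports Defs
begin

definition ptw :: "('a \<times> 'a) set \<Rightarrow> ('v \<Rightarrow> 'a) \<Rightarrow> ('v \<Rightarrow> 'a) \<Rightarrow> bool" where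
  "ptw \<pi> s t \<longleftrightarrow> (\<forall>v. (s v, t v) \<in> \<pi>)"

lemma upd_Nil1[simp]: "upd s [] as = s" by (simp add: upd_def)
lemma upd_Nil2[simp]: "upd s xs [] = s" by (simp add: upd_def)
lemma upd_Cons[simp]: "upd s (x#xs) (a#as) = (upd s xs as)(x:=a)"
  by (auto simp: upd_def fun_eq_iff)

lemma upd_ptw: "list_all2 (\<lambda>x y. (x,y)\<in>\<pi>) as bs \<Longrightarrow> ptw \<pi> s t \<Longrightarrow> ptw \<pi> (upd s xs as) (upd t xs bs)"
proof (induction xs arbitrary: as bs)
  case Nil thus ?case by simp
next
  case (Cons x xs)
  note IH = Cons.IH and prems = Cons.prems
  show ?case
  proof (cases as)
    case Nil with prems show ?thesis by simp
  next
    case (Cons a as')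
    with prems obtain b bs' where "bs = b#bs'" "(a,b)\<in>\<pi>" "list_all2 (\<lambda>x y. (x,y)\<in>\<pi>) as' bs'"
      by (auto simp: list_all2_Cons1)
    with IH[of as' bs'] prems Cons show ?thesis by (auto simp: ptw_def)
  qed
qed

lemma upd_other: "v \<notin> set xs \<Longrightarrow> upd s xs as v = s v"
  by (induction xs arbitrary: as) (auto simp: neq_Nil_conv, metis list.exhaust upd_Cons upd_Nil2 fun_upd_other)

lemma upd_same: "v \<in> set xs \<Longrightarrow> length xs = length as \<Longrightarrow> upd s xs as v = upd r xs as v"
proof (induction xs arbitrary: as)
  case Nil thus ?case by simp
next
  case (Cons x xs) thus ?case by (cases as) auto
qed

lemma map_upd: "distinct xs \<Longrightarrow> length xs = length as \<Longrightarrow> map (upd s xs as) xs = as"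
proof (induction xs arbitrary: as)
  case Nil thus ?case by simp
next
  case (Cons x xs)
  then obtain a as' where as: "as = a # as'" by (cases as) auto
  have "map (\<lambda>b. if b = x then a else upd s xs as' b) xs = map (upd s xs as') xs"
    using Cons.prems by (intro map_cong) auto
  with Cons as show ?case by simp
qed

lemma upd_map_self: "upd s ys (map s ys) = s"
  by (induction ys) auto

lemma rel_tuple_refl: "(\<forall>c. (c,c)\<in>\<pi>) \<Longrightarrow> rel_tuple \<pi> xs xs"
  by (induct xs) (auto simp: rel_tuple_def)

lemma rel_tuple_map: "ptw \<pi> s t \<Longrightarrow> rel_tuple \<pi> (map s vs) (map t vs)"
  by (induct vs) (auto simp: rel_tuple_def ptw_def)

lemma rel_tuple_comp: "rel_tuple \<rho> xs ys \<Longrightarrow> rel_tuple \<pi> ys zs \<Longrightarrow> rel_tuple (\<rho> O \<pi>) xs zs"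
proof (induction xs arbitrary: ys zs)
  case Nil thus ?case by (auto simp: rel_tuple_def)
next
  case (Cons x xs)
  then obtain y ys' where y: "ys = y # ys'" "(x,y)\<in>\<rho>" "rel_tuple \<rho> xs ys'"
    by (auto simp: rel_tuple_def list_all2_Cons1)
  with Cons obtain z zs' where z: "zs = z # zs'" "(y,z)\<in>\<pi>" "rel_tuple \<pi> ys' zs'"
    by (auto simp: rel_tuple_def list_all2_Cons1)
  from Cons.IH[OF y(3) z(3)] y z show ?case by (auto simp: rel_tuple_def)
qed

lemma rel_tuple_conv: "rel_tuple \<pi> xs ys \<Longrightarrow> rel_tuple (\<pi>\<inverse>) ys xs"
proof (induction xs arbitrary: ys)
  case Nil thus ?case by (auto simp: rel_tuple_def)
next
  case (Cons x xs) thus ?case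
    by (auto simp: rel_tuple_def list_all2_Cons1)
qed

lemma exists_distinct: "infinite (UNIV::'v set) \<Longrightarrow> \<exists>vs::'v list. distinct vs \<and> length vs = n"
proof -
  assume "infinite (UNIV::'v set)"
  then obtain B :: "'v set" where "finite B" "card B = n" using infinite_arbitrarily_large by blast
  moreover obtain vs where "set vs = B" "distinct vs" using finite_distinct_list[OF \<open>finite B\<close>] by blast
  ultimately show ?thesis by (metis distinct_card)
qed

lemma definable_inv:
  fixes X :: "('v \<Rightarrow> 'a) set" and q :: "'a operation set"
  assumes sims: "\<forall>\<pi>\<in>P. similarity \<pi>" and EP: "E \<in> P" and Erefl: "\<forall>a. (a,a)\<in>E"
    and rel: "\<forall>\<pi>\<in>P. \<forall>k R. Rel k R \<in> q \<longrightarrow> inv_rel \<pi> k R"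
    and qu: "\<forall>\<pi>\<in>P. \<forall>ks Q. Quant ks Q \<in> q \<longrightarrow> quant_inv E \<pi> ks Q"
    and X: "X \<in> definable q"
  shows "\<forall>\<pi>\<in>P. \<forall>s t. ptw \<pi> s t \<longrightarrow> (s \<in> X \<longleftrightarrow> t \<in> X)"
  using X
proof (induction rule: definable.induct)
  case (atom k R vs)
  show ?case
  proof (intro ballI allI impI)
    fix \<pi> and s t :: "'v \<Rightarrow> 'a" assume pi: "\<pi>\<in>P" "ptw \<pi> s t"
    from pi(2) have "rel_tuple \<pi> (map s vs) (map t vs)" by (rule rel_tuple_map)
    with rel pi atom show "s \<in> {s. map s vs \<in> R} \<longleftrightarrow> t \<in> {s. map s vs \<in> R}"
      by (auto simp: inv_rel_def)
  qed
next
  case (neg X) thus ?case by auto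
next
  case (conj F) thus ?case by blast
next
  case (ex X W)
  show ?case
  proof (intro ballI allI impI)
    fix \<pi> and s t :: "'v \<Rightarrow> 'a" assume pi: "\<pi>\<in>P" "ptw \<pi> s t"
    have sim: "similarity \<pi>" using sims pi by blast
    show "s \<in> {s. \<exists>t\<in>X. \<forall>v. v \<notin> W \<longrightarrow> t v = s v} \<longleftrightarrow> t \<in> {s. \<exists>t\<in>X. \<forall>v. v \<notin> W \<longrightarrow> t v = s v}"
    proof
      assume "s \<in> {s. \<exists>t\<in>X. \<forall>v. v \<notin> W \<longrightarrow> t v = s v}"
      then obtain t' where t': "t' \<in> X" "\<forall>v. v \<notin> W \<longrightarrow> t' v = s v" by blast
      define t'' where "t'' = (\<lambda>v. if v\<in>W then (SOME y. (t' v, y)\<in>\<pi>) else t v)"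
      have "ptw \<pi> t' t''"
        unfolding ptw_def t''_def
      proof
        fix v show "(t' v, if v \<in> W then SOME y. (t' v, y) \<in> \<pi> else t v) \<in> \<pi>"
        proof (cases "v \<in> W")
          case True thus ?thesis using sim unfolding similarity_def by (metis (mono_tags, lifting) someI_ex)
        next
          case False thus ?thesis using t' pi by (simp add: ptw_def)
        qed
      qed
      then have "t'' \<in> X" using ex.IH pi t' by blast
      moreover have "\<forall>v. v \<notin> W \<longrightarrow> t'' v = t v" by (simp add: t''_def)
      ultimately show "t \<in> {s. \<exists>t\<in>X. \<forall>v. v \<notin> W \<longrightarrow> t v = s v}" by blast
    next
      assume "t \<in> {s. \<exists>t\<in>X. \<forall>v. v \<notin> W \<longrightarrow> t v = s v}"
      then obtain t' where t': "t' \<in> X" "\<forall>v. v \<notin> W \<longrightarrow> t' v = t v" by blast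
      define t'' where "t'' = (\<lambda>v. if v\<in>W then (SOME y. (y, t' v)\<in>\<pi>) else s v)"
      have "ptw \<pi> t'' t'"
        unfolding ptw_def t''_def
      proof
        fix v show "(if v \<in> W then SOME y. (y, t' v) \<in> \<pi> else s v, t' v) \<in> \<pi>"
        proof (cases "v \<in> W")
          case True thus ?thesis using sim unfolding similarity_def by (metis (mono_tags, lifting) someI_ex)
        next
          case False thus ?thesis using t' pi by (simp add: ptw_def)
        qed
      qed
      then have "t'' \<in> X" using ex.IH pi t' by blast
      moreover have "\<forall>v. v \<notin> W \<longrightarrow> t'' v = s v" by (simp add: t''_def)
      ultimately show "s \<in> {s. \<exists>t\<in>X. \<forall>v. v \<notin> W \<longrightarrow> t v = s v}" by blast
    qed
  qed
next
  case (quant ks Q xss Xs)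
  show ?case
  proof (intro ballI allI impI)
    fix \<pi> and s t :: "'v \<Rightarrow> 'a" assume pi: "\<pi>\<in>P" "ptw \<pi> s t"
    define Rs where "Rs = (\<lambda>u. map (\<lambda>i. {as. length as = ks ! i \<and> upd u (xss ! i) as \<in> Xs ! i}) [0..<length ks])"
    have qt: "Rs u \<in> qtype ks" for u by (auto simp: Rs_def qtype_def tuples_def)
    have IHi: "\<forall>\<pi>\<in>P. \<forall>s t. ptw \<pi> s t \<longrightarrow> (s \<in> Xs ! i \<longleftrightarrow> t \<in> Xs ! i)" if "i < length ks" for i
      using quant that by blast
    have ir: "inv_rel E (ks ! i) (Rs u ! i)" if "i < length ks" for i u
      unfolding inv_rel_def
    proof (intro allI impI)
      fix as bs assume "length as = ks ! i" "rel_tuple E as bs"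
      moreover have "ptw E (upd u (xss ! i) as) (upd u (xss ! i) bs)"
        using upd_ptw[of E as bs u u] \<open>rel_tuple E as bs\<close> Erefl by (auto simp: rel_tuple_def ptw_def)
      ultimately show "as \<in> Rs u ! i \<longleftrightarrow> bs \<in> Rs u ! i"
        using IHi[OF that] EP that by (auto simp: Rs_def rel_tuple_def list_all2_lengthD)
    qed
    have rs: "rel_sim \<pi> (ks ! i) (Rs s ! i) (Rs t ! i)" if "i < length ks" for i
      unfolding rel_sim_def
    proof (intro allI impI)
      fix as bs assume "length as = ks ! i" "rel_tuple \<pi> as bs"
      moreover have "ptw \<pi> (upd s (xss ! i) as) (upd t (xss ! i) bs)"
        using upd_ptw[of \<pi> as bs s t] \<open>rel_tuple \<pi> as bs\<close> pi by (auto simp: rel_tuple_def)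
      ultimately show "as \<in> Rs s ! i \<longleftrightarrow> bs \<in> Rs t ! i"
        using IHi[OF that] pi that by (auto simp: Rs_def rel_tuple_def list_all2_lengthD)
    qed
    have "Rs s \<in> Q \<longleftrightarrow> Rs t \<in> Q"
      using qu pi quant(1) qt ir rs by (auto simp: quant_inv_def)
    then show "s \<in> {s. map (\<lambda>i. {as. length as = ks ! i \<and> upd s (xss ! i) as \<in> Xs ! i}) [0..<length ks] \<in> Q}
       \<longleftrightarrow> t \<in> {s. map (\<lambda>i. {as. length as = ks ! i \<and> upd s (xss ! i) as \<in> Xs ! i}) [0..<length ks] \<in> Q}"
      by (simp add: Rs_def)
  qed
qed

lemma approx_sub_indisc:
  fixes V :: "'v itself" and q :: "'a operation set"
  assumes sims: "\<forall>\<pi>\<in>P. similarity \<pi>"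
    and inv: "\<forall>X\<in>(definable q :: ('v \<Rightarrow> 'a) set set). \<forall>\<pi>\<in>P. \<forall>s t. ptw \<pi> s t \<longrightarrow> (s\<in>X \<longleftrightarrow> t\<in>X)"
  shows "approx P \<subseteq> indisc V q"
proof
  fix p assume p: "p \<in> approx P"
  obtain a b where ab: "p = (a,b)" by force
  have "\<forall>(X :: ('v \<Rightarrow> 'a) set) \<in> definable q. \<forall>x ys.
       distinct (x # ys) \<and> depends_only X (set (x # ys)) \<longrightarrow>
       (\<forall>cs s. length cs = length ys \<longrightarrow>
          (upd s (x # ys) (a # cs) \<in> X \<longleftrightarrow> upd s (x # ys) (b # cs) \<in> X))"
  proof (intro ballI allI impI)
    fix X :: "('v \<Rightarrow> 'a) set" and x ys and cs :: "'a list" and s :: "'v \<Rightarrow> 'a"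
    assume X: "X \<in> definable q" and d: "distinct (x # ys) \<and> depends_only X (set (x # ys))"
      and l: "length cs = length ys"
    from p ab obtain \<pi> where pi: "\<pi> \<in> P" "rel_tuple \<pi> (a#cs) (b#cs)"
      by (auto simp: approx_def)
    have sim: "similarity \<pi>" using sims pi by blast
    define r :: "'v \<Rightarrow> 'a" where "r = (\<lambda>v. undefined)"
    define r' :: "'v \<Rightarrow> 'a" where "r' = (\<lambda>v. SOME y. (undefined, y) \<in> \<pi>)"
    have "ptw \<pi> r r'" using sim unfolding ptw_def r_def r'_def similarity_def
      by (metis (mono_tags, lifting) someI_ex)
    then have "ptw \<pi> (upd r (x#ys) (a#cs)) (upd r' (x#ys) (b#cs))"
      using upd_ptw pi(2) unfolding rel_tuple_def by blast
    then have 1: "upd r (x#ys) (a#cs) \<in> X \<longleftrightarrow> upd r' (x#ys) (b#cs) \<in> X"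
      using inv X pi(1) by blast
    have 2: "upd s (x#ys) (a#cs) \<in> X \<longleftrightarrow> upd r (x#ys) (a#cs) \<in> X"
      using d l upd_same[of _ "x#ys" "a#cs" s r] unfolding depends_only_def
      by (metis length_Cons)
    have 3: "upd s (x#ys) (b#cs) \<in> X \<longleftrightarrow> upd r' (x#ys) (b#cs) \<in> X"
      using d l upd_same[of _ "x#ys" "b#cs" s r'] unfolding depends_only_def
      by (metis length_Cons)
    show "upd s (x # ys) (a # cs) \<in> X \<longleftrightarrow> upd s (x # ys) (b # cs) \<in> X"
      using 1 2 3 by blast
  qed
  then show "p \<in> indisc V q" by (simp add: indisc_def ab)
qed

lemma indisc_single:
  fixes V :: "'v itself" and q :: "'a operation set" and X :: "('v \<Rightarrow> 'a) set"
  assumes ab: "(a,b) \<in> indisc V q" and X: "X \<in> definable q" and F: "finite F"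
    and dep: "depends_only X F"
  shows "s(x:=a) \<in> X \<longleftrightarrow> s(x:=b) \<in> X"
proof -
  obtain ys where ys: "set ys = F - {x}" "distinct ys"
    using finite_distinct_list[of "F - {x}"] F by blast
  have d: "distinct (x # ys)" using ys by auto
  have "depends_only X (set (x # ys))" using dep ys unfolding depends_only_def
    by auto
  with ab X d have "upd s (x # ys) (a # map s ys) \<in> X \<longleftrightarrow> upd s (x # ys) (b # map s ys) \<in> X"
    unfolding indisc_def by auto
  then show ?thesis by (simp add: upd_map_self)
qed

lemma finite_change:
  assumes "finite D"
    and L: "\<forall>s x a b. (a,b)\<in>E \<longrightarrow> (s(x:=a)\<in>X \<longleftrightarrow> s(x:=b)\<in>X)"
  shows "\<forall>s t. (\<forall>v. v\<notin>D \<longrightarrow> s v = t v) \<longrightarrow> (\<forall>v\<in>D. (s v, t v)\<in>E) \<longrightarrow> (s\<in>X \<longleftrightarrow> t\<in>X)"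
  using assms(1)
proof (induction D rule: finite_induct)
  case empty
  then show ?case by (metis ext empty_iff)
next
  case (insert x D)
  show ?case
  proof (intro allI impI)
    fix s t assume o: "\<forall>v. v \<notin> insert x D \<longrightarrow> s v = t v" and r: "\<forall>v\<in>insert x D. (s v, t v) \<in> E"
    let ?s' = "s(x := t x)"
    have "?s' \<in> X \<longleftrightarrow> t \<in> X" using insert.IH o r insert.hyps(2) by auto
    moreover have "s(x := s x) \<in> X \<longleftrightarrow> ?s' \<in> X" using L r by blast
    ultimately show "s \<in> X \<longleftrightarrow> t \<in> X" by simp
  qed
qed

theorem proposition15:
  fixes V :: "'v itself" and q :: "'a operation set" and \<Pi> :: "('a \<times> 'a) set set"
  assumes "infinite (UNIV :: 'v set)"
    and "operations q"
    and "monoid_with_involution \<Pi>"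
  shows "(approx \<Pi> \<in> \<Pi> \<longrightarrow> approx \<Pi> = indisc V (Inv \<Pi>))
         \<and> indisc V q = approx (Sim V q)"
proof
  have sims: "\<forall>\<pi>\<in>\<Pi>. similarity \<pi>" and comp: "\<forall>\<pi>\<in>\<Pi>. \<forall>\<rho>\<in>\<Pi>. \<pi> O \<rho> \<in> \<Pi>"
    and conv: "\<forall>\<pi>\<in>\<Pi>. \<pi>\<inverse> \<in> \<Pi>"
    using assms(3) by (auto simp: monoid_with_involution_def)
  show "approx \<Pi> \<in> \<Pi> \<longrightarrow> approx \<Pi> = indisc V (Inv \<Pi>)"
  proof
    assume AP: "approx \<Pi> \<in> \<Pi>"
    let ?A = "approx \<Pi>"
    have Asim: "similarity ?A" using sims AP by blast
    have refl0: "\<forall>c. (c,c) \<in> ?A O ?A\<inverse>"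
      using Asim unfolding similarity_def by blast
    have AA: "?A O ?A\<inverse> \<in> \<Pi>" using comp conv AP by blast
    have Arefl: "\<forall>a. (a,a) \<in> ?A"
    proof
      fix a
      have "\<forall>cs. rel_tuple (?A O ?A\<inverse>) (a#cs) (a#cs)" using rel_tuple_refl[OF refl0] by blast
      then show "(a,a) \<in> ?A" using AA unfolding approx_def by blast
    qed
    have inv: "\<forall>X\<in>(definable (Inv \<Pi>) :: ('v \<Rightarrow> 'a) set set). \<forall>\<pi>\<in>\<Pi>. \<forall>s t. ptw \<pi> s t \<longrightarrow> (s\<in>X \<longleftrightarrow> t\<in>X)"
    proof
      fix X :: "('v \<Rightarrow> 'a) set" assume "X \<in> definable (Inv \<Pi>)"
      moreover have "\<forall>\<pi>\<in>\<Pi>. \<forall>k R. Rel k R \<in> Inv \<Pi> \<longrightarrow> inv_rel \<pi> k R" by (auto simp: Inv_def)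
      moreover have "\<forall>\<pi>\<in>\<Pi>. \<forall>ks Q. Quant ks Q \<in> Inv \<Pi> \<longrightarrow> quant_inv ?A \<pi> ks Q" by (auto simp: Inv_def)
      ultimately show "\<forall>\<pi>\<in>\<Pi>. \<forall>s t. ptw \<pi> s t \<longrightarrow> (s\<in>X \<longleftrightarrow> t\<in>X)"
        using definable_inv[of \<Pi> ?A "Inv \<Pi>" X] sims AP Arefl by blast
    qed
    have sub1: "?A \<subseteq> indisc V (Inv \<Pi>)" using approx_sub_indisc[OF sims inv] .
    have sub2: "indisc V (Inv \<Pi>) \<subseteq> ?A"
    proof
      fix p assume p: "p \<in> indisc V (Inv \<Pi>)"
      obtain a b where ab: "p = (a,b)" by force
      have "\<forall>cs. \<exists>\<pi>\<in>\<Pi>. rel_tuple \<pi> (a#cs) (b#cs)"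
      proof
        fix cs :: "'a list"
        define R where "R = {ds. length ds = Suc (length cs) \<and> (\<exists>\<pi>\<in>\<Pi>. rel_tuple \<pi> (a#cs) ds)}"
        have "\<forall>\<pi>\<in>\<Pi>. inv_rel \<pi> (Suc (length cs)) R"
          unfolding inv_rel_def
        proof (intro ballI allI impI)
          fix \<pi> ds es assume pi: "\<pi> \<in> \<Pi>" and l: "length ds = Suc (length cs)" and r: "rel_tuple \<pi> ds es"
          have le: "length es = Suc (length cs)" using l r by (simp add: rel_tuple_def list_all2_lengthD[symmetric])
          show "ds \<in> R \<longleftrightarrow> es \<in> R"
          proof
            assume "ds \<in> R"
            then obtain \<rho> where "\<rho> \<in> \<Pi>" "rel_tuple \<rho> (a#cs) ds" by (auto simp: R_def)
            then have "\<rho> O \<pi> \<in> \<Pi>" "rel_tuple (\<rho> O \<pi>) (a#cs) es"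
              using comp pi rel_tuple_comp r by blast+
            then show "es \<in> R" using le by (auto simp: R_def)
          next
            assume "es \<in> R"
            then obtain \<rho> where "\<rho> \<in> \<Pi>" "rel_tuple \<rho> (a#cs) es" by (auto simp: R_def)
            then have "\<rho> O \<pi>\<inverse> \<in> \<Pi>" "rel_tuple (\<rho> O \<pi>\<inverse>) (a#cs) ds"
              using comp conv pi rel_tuple_comp rel_tuple_conv[OF r] by blast+
            then show "ds \<in> R" using l by (auto simp: R_def)
          qed
        qed
        moreover have "R \<subseteq> tuples (Suc (length cs))" by (auto simp: R_def tuples_def)
        ultimately have RI: "Rel (Suc (length cs)) R \<in> Inv \<Pi>" by (auto simp: Inv_def)
        obtain vs :: "'v list" where vs: "distinct vs" "length vs = Suc (length cs)"
          using exists_distinct[OF assms(1)] by blast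
        then obtain x ys where xys: "vs = x # ys" "length ys = length cs" by (cases vs) auto
        define X :: "('v \<Rightarrow> 'a) set" where "X = {s. map s vs \<in> R}"
        have XD: "X \<in> definable (Inv \<Pi>)" unfolding X_def using RI vs(2) by (rule definable.atom)
        have dep: "depends_only X (set (x # ys))" unfolding depends_only_def X_def xys(1)[symmetric]
          by (metis (no_types, lifting) map_eq_conv mem_Collect_eq)
        define r :: "'v \<Rightarrow> 'a" where "r = (\<lambda>v. undefined)"
        have eq: "upd r (x # ys) (a # cs) \<in> X \<longleftrightarrow> upd r (x # ys) (b # cs) \<in> X"
          using p ab XD dep vs xys unfolding indisc_def by auto
        have ma: "map (upd r vs (a#cs)) vs = a#cs" using vs by (simp add: map_upd)
        have mb: "map (upd r vs (b#cs)) vs = b#cs" using vs by (simp add: map_upd)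
        have "a#cs \<in> R" using Arefl unfolding R_def approx_def by auto
        then have "b#cs \<in> R" using eq ma mb xys(1) unfolding X_def by simp
        then show "\<exists>\<pi>\<in>\<Pi>. rel_tuple \<pi> (a#cs) (b#cs)" by (auto simp: R_def)
      qed
      then show "p \<in> ?A" by (simp add: ab approx_def)
    qed
    show "?A = indisc V (Inv \<Pi>)" using sub1 sub2 by blast
  qed
next
  let ?E = "indisc V q" and ?S = "Sim V q"
  have Erefl: "\<forall>a. (a,a) \<in> ?E" by (simp add: indisc_def)
  have Esim: "similarity ?E" using Erefl unfolding similarity_def by blast
  have Erel: "\<forall>k R. Rel k R \<in> q \<longrightarrow> inv_rel ?E k R"
  proof (intro allI impI)
    fix k R assume RQ: "Rel k R \<in> q"
    obtain vs :: "'v list" where vs: "distinct vs" "length vs = k"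
      using exists_distinct[OF assms(1)] by blast
    define X :: "('v \<Rightarrow> 'a) set" where "X = {s. map s vs \<in> R}"
    have XD: "X \<in> definable q" unfolding X_def using RQ vs(2) by (rule definable.atom)
    have dep: "depends_only X (set vs)" unfolding depends_only_def X_def
      by (metis (no_types, lifting) map_eq_conv mem_Collect_eq)
    have L: "\<forall>s x a b. (a,b)\<in>?E \<longrightarrow> (s(x:=a)\<in>X \<longleftrightarrow> s(x:=b)\<in>X)"
      using indisc_single[OF _ XD _ dep] by blast
    have G: "\<forall>s t. (\<forall>v. v\<notin>set vs \<longrightarrow> s v = t v) \<longrightarrow> (\<forall>v\<in>set vs. (s v, t v)\<in>?E) \<longrightarrow> (s\<in>X \<longleftrightarrow> t\<in>X)"
      using finite_change[OF _ L] by blast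
    show "inv_rel ?E k R" unfolding inv_rel_def
    proof (intro allI impI)
      fix as bs assume l: "length as = k" and r: "rel_tuple ?E as bs"
      have lb: "length bs = k" using l r by (simp add: rel_tuple_def list_all2_lengthD[symmetric])
      define r0 :: "'v \<Rightarrow> 'a" where "r0 = (\<lambda>v. undefined)"
      have "ptw ?E r0 r0" using Erefl by (simp add: ptw_def)
      then have p: "ptw ?E (upd r0 vs as) (upd r0 vs bs)" using upd_ptw r unfolding rel_tuple_def by blast
      have o: "\<forall>v. v\<notin>set vs \<longrightarrow> upd r0 vs as v = upd r0 vs bs v" by (simp add: upd_other)
      have "upd r0 vs as \<in> X \<longleftrightarrow> upd r0 vs bs \<in> X" using G o p unfolding ptw_def by blast
      moreover have "map (upd r0 vs as) vs = as" "map (upd r0 vs bs) vs = bs"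
        using vs l lb by (simp_all add: map_upd)
      ultimately show "as \<in> R \<longleftrightarrow> bs \<in> R" unfolding X_def by simp
    qed
  qed
  have EQ: "\<forall>ks Q. Quant ks Q \<in> q \<longrightarrow> quant_inv ?E ?E ks Q"
  proof (intro allI impI)
    fix ks Q
    show "quant_inv ?E ?E ks Q" unfolding quant_inv_def
    proof (intro allI impI)
      fix Rs Ss assume R: "Rs \<in> qtype ks" and S: "Ss \<in> qtype ks"
        and h: "\<forall>i<length ks. inv_rel ?E (ks ! i) (Rs ! i) \<and> inv_rel ?E (ks ! i) (Ss ! i) \<and>
                rel_sim ?E (ks ! i) (Rs ! i) (Ss ! i)"
      have "Rs = Ss"
      proof (rule nth_equalityI)
        show "length Rs = length Ss" using R S by (simp add: qtype_def)
      next
        fix i assume i: "i < length Rs"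
        then have i': "i < length ks" using R by (simp add: qtype_def)
        have sub: "Rs ! i \<subseteq> tuples (ks ! i)" "Ss ! i \<subseteq> tuples (ks ! i)"
          using R S i' by (auto simp: qtype_def)
        have rs: "rel_sim ?E (ks ! i) (Rs ! i) (Ss ! i)" using h i' by blast
        show "Rs ! i = Ss ! i"
        proof
          show "Rs ! i \<subseteq> Ss ! i"
          proof
            fix as assume "as \<in> Rs ! i"
            moreover then have "length as = ks ! i" using sub by (auto simp: tuples_def)
            ultimately show "as \<in> Ss ! i" using rs rel_tuple_refl[OF Erefl] unfolding rel_sim_def by blast
          qed
        next
          show "Ss ! i \<subseteq> Rs ! i"
          proof
            fix as assume "as \<in> Ss ! i"
            moreover then have "length as = ks ! i" using sub by (auto simp: tuples_def)
            ultimately show "as \<in> Rs ! i" using rs rel_tuple_refl[OF Erefl] unfolding rel_sim_def by blast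
          qed
        qed
      qed
      then show "Rs \<in> Q \<longleftrightarrow> Ss \<in> Q" by simp
    qed
  qed
  have ES: "?E \<in> ?S" using Esim Erel EQ by (simp add: Sim_def)
  have sub_a: "?E \<subseteq> approx ?S"
  proof
    fix p assume p: "p \<in> ?E"
    obtain a b where ab: "p = (a,b)" by force
    have "\<forall>cs. rel_tuple ?E (a#cs) (b#cs)"
      using p ab rel_tuple_refl[OF Erefl] by (simp add: rel_tuple_def)
    then show "p \<in> approx ?S" using ES ab by (auto simp: approx_def)
  qed
  have sims2: "\<forall>\<pi>\<in>?S. similarity \<pi>" by (simp add: Sim_def)
  have inv2: "\<forall>X\<in>(definable q :: ('v \<Rightarrow> 'a) set set). \<forall>\<pi>\<in>?S. \<forall>s t. ptw \<pi> s t \<longrightarrow> (s\<in>X \<longleftrightarrow> t\<in>X)"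
  proof
    fix X :: "('v \<Rightarrow> 'a) set" assume "X \<in> definable q"
    moreover have "\<forall>\<pi>\<in>?S. \<forall>k R. Rel k R \<in> q \<longrightarrow> inv_rel \<pi> k R" by (simp add: Sim_def)
    moreover have "\<forall>\<pi>\<in>?S. \<forall>ks Q. Quant ks Q \<in> q \<longrightarrow> quant_inv ?E \<pi> ks Q" by (simp add: Sim_def)
    ultimately show "\<forall>\<pi>\<in>?S. \<forall>s t. ptw \<pi> s t \<longrightarrow> (s\<in>X \<longleftrightarrow> t\<in>X)"
      using definable_inv[of ?S ?E q X] sims2 ES Erefl by blast
  qed
  have sub_b: "approx ?S \<subseteq> ?E" using approx_sub_indisc[OF sims2 inv2] .
  show "?E = approx ?S" using sub_a sub_b by blast
qed

end
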